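(* For every natural number $n\geq 2$, the $n$-Split Interval $S_n(I)$ is a compact Hausdorff space.
   Context: Let $I=[0,1]$. For $n\geq 2$, $S_n(I)$ is the set $I\times\{0,\ldots,n-1\}$ with the topology in which the points $(x,i)$ with $i\in\{2,\ldots,n-1\}$ are isolated, a point $(x,0)$ with $x>0$ has basic neighbourhoods $\{(x,0)\}\cup\{(y,i): z_0<y<x,\ i\in\{0,\ldots,n-1\}\}$ for $z_0\in I$, $z_0<x$, a point $(x,1)$ with $x<1$ has basic neighbourhoods $\{(x,1)\}\cup\{(y,i): x<y<z_1,\ i\in\{0,\ldots,n-1\}\}$ for $z_1\in I$, $z_1>x$, and the points $(0,0)$ and $(1,1)$ are isolated. *)

theory Defs
  imports "HOL-Analysis.Analysis"
begin

definition split_interval_carrier :: "nat \<Rightarrow> (real \<times> nat) set" where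
  "split_interval_carrier n = {0..1} \<times> {0..<n}"

definition split_interval_basis :: "nat \<Rightarrow> (real \<times> nat) set set" where
  "split_interval_basis n =
     {{(x, i)} | x i. x \<in> {0..1} \<and> 2 \<le> i \<and> i < n}
   \<union> {{(x, 0)} \<union> {(y, i) | y i. z0 < y \<and> y < x \<and> i < n} | x z0.
        x \<in> {0..1} \<and> 0 < x \<and> z0 \<in> {0..1} \<and> z0 < x}
   \<union> {{(x, 1)} \<union> {(y, i) | y i. x < y \<and> y < z1 \<and> i < n} | x z1.
        x \<in> {0..1} \<and> x < 1 \<and> z1 \<in> {0..1} \<and> x < z1}
   \<union> {{(0, 0)}, {(1, 1)}}"

definition split_interval :: "nat \<Rightarrow> (real \<times> nat) topology" where
  "split_interval n = topology_generated_by (split_interval_basis n)"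

end

theory Submission
  imports Defs
begin

definition nb :: "nat \<Rightarrow> real \<times> nat \<Rightarrow> real \<Rightarrow> (real \<times> nat) set" where
"nb n p e = (if snd p = 0 \<and> fst p > 0 then insert p {(y,i). max 0 (fst p - e) < y \<and> y < fst p \<and> i < n}
  else if snd p = 1 \<and> fst p < 1 then insert p {(y,i). fst p < y \<and> y < min 1 (fst p + e) \<and> i < n}
  else {p})"

lemma nb_mem: "p \<in> nb n p e"
  unfolding nb_def by auto

lemma nb_mono: "e \<le> e' \<Longrightarrow> nb n p e \<subseteq> nb n p e'"
  unfolding nb_def by auto

lemma nb_basis:
  assumes "n \<ge> 2" "p \<in> split_interval_carrier n" "e > 0"
  shows "nb n p e \<in> split_interval_basis n"
proof -
  obtain x i where p: "p = (x,i)" by force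
  have x: "0 \<le> x" "x \<le> 1" "i < n" using assms(2) p by (auto simp: split_interval_carrier_def)
  consider "i = 0" "x > 0" | "i = 0" "x = 0" | "i = 1" "x < 1" | "i = 1" "x = 1" | "i \<ge> 2"
    using x by linarith
  then show ?thesis
  proof cases
    case 1
    have eq: "nb n p e = {(x, 0)} \<union> {(y, i) | y i. max 0 (x - e) < y \<and> y < x \<and> i < n}"
      using 1 p by (auto simp: nb_def)
    have "\<exists>x' z0. nb n p e = {(x', 0)} \<union> {(y, i) | y i. z0 < y \<and> y < x' \<and> i < n} \<and>
        x' \<in> {0..1} \<and> 0 < x' \<and> z0 \<in> {0..1} \<and> z0 < x'"
      apply (rule exI[of _ x], rule exI[of _ "max 0 (x - e)"])
      using 1 x assms(3) eq by auto
    then show ?thesis unfolding split_interval_basis_def by blast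
  next
    case 2
    then show ?thesis using p by (auto simp: nb_def split_interval_basis_def)
  next
    case 3
    have eq: "nb n p e = {(x, 1)} \<union> {(y, i) | y i. x < y \<and> y < min 1 (x + e) \<and> i < n}"
      using 3 p by (auto simp: nb_def)
    have "\<exists>x' z1. nb n p e = {(x', 1)} \<union> {(y, i) | y i. x' < y \<and> y < z1 \<and> i < n} \<and>
        x' \<in> {0..1} \<and> x' < 1 \<and> z1 \<in> {0..1} \<and> x' < z1"
      apply (rule exI[of _ x], rule exI[of _ "min 1 (x + e)"])
      using 3 x assms(3) eq by auto
    then show ?thesis unfolding split_interval_basis_def by blast
  next
    case 4
    then show ?thesis using p by (auto simp: nb_def split_interval_basis_def)
  next
    case 5
    then show ?thesis using p x by (auto simp: nb_def split_interval_basis_def)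
  qed
qed

lemma basis_nb:
  assumes "B \<in> split_interval_basis n" "p \<in> B"
  shows "\<exists>e>0. nb n p e \<subseteq> B"
proof -
  obtain x i where p: "p = (x,i)" by force
  consider (iso) "nb n p 1 = {p}" | (L) "i = 0" "x > 0" | (R) "i = 1" "x < 1"
    unfolding nb_def p by (cases "i = 0 \<and> 0 < x"; cases "i = 1 \<and> x < 1") auto
  then show ?thesis
  proof cases
    case iso
    then show ?thesis using assms(2) by (auto intro!: exI[of _ 1])
  next
    case L
    from assms(1) consider (a) x' i' where "B = {(x', i')}" "2 \<le> i' \<or> (x',i') = (0,0) \<or> (x',i') = (1,1)"
      | (b) x' z0 where "B = {(x', 0)} \<union> {(y, i) | y i. z0 < y \<and> y < x' \<and> i < n}" "0 \<le> z0" "z0 < x'" "x' \<le> 1"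
      | (c) x' z1 where "B = {(x', 1)} \<union> {(y, i) | y i. x' < y \<and> y < z1 \<and> i < n}" "0 \<le> x'" "x' < z1" "z1 \<le> 1"
      unfolding split_interval_basis_def by auto
    then show ?thesis
    proof cases
      case a then show ?thesis using assms(2) p L by auto
    next
      case b
      have "z0 < x" using b assms(2) p L by auto
      moreover have "x \<le> x'" "x' = x \<or> 0 < n" using b assms(2) p L by auto
      ultimately show ?thesis using b p L
        by (auto intro!: exI[of _ "x - z0"] simp: nb_def)
    next
      case c
      have "x' < x" "x < z1" "0 < n" using c assms(2) p L by auto
      then show ?thesis using c p L
        by (auto intro!: exI[of _ "x - x'"] simp: nb_def)
    qed
  next
    case R
    from assms(1) consider (a) x' i' where "B = {(x', i')}" "2 \<le> i' \<or> (x',i') = (0,0) \<or> (x',i') = (1,1)"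
      | (b) x' z0 where "B = {(x', 0)} \<union> {(y, i) | y i. z0 < y \<and> y < x' \<and> i < n}" "0 \<le> z0" "z0 < x'" "x' \<le> 1"
      | (c) x' z1 where "B = {(x', 1)} \<union> {(y, i) | y i. x' < y \<and> y < z1 \<and> i < n}" "0 \<le> x'" "x' < z1" "z1 \<le> 1"
      unfolding split_interval_basis_def by auto
    then show ?thesis
    proof cases
      case a then show ?thesis using assms(2) p R by auto
    next
      case b
      have "z0 < x" "x < x'" "1 < n" using b assms(2) p R by auto
      then show ?thesis using b p R
        by (auto intro!: exI[of _ "x' - x"] simp: nb_def)
    next
      case c
      have "x < z1" using c assms(2) p R by auto
      moreover have "x' \<le> x" "x' = x \<or> 1 < n" using c assms(2) p R by auto
      ultimately show ?thesis using c p R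
        by (auto intro!: exI[of _ "z1 - x"] simp: nb_def)
    qed
  qed
qed

lemma gen_nb:
  assumes "generate_topology_on (split_interval_basis n) U" "p \<in> U"
  shows "\<exists>e>0. nb n p e \<subseteq> U"
  using assms
proof (induction arbitrary: p rule: generate_topology_on.induct)
  case Empty
  then show ?case by simp
next
  case (Int a b)
  then obtain e1 e2 where "e1 > 0" "nb n p e1 \<subseteq> a" "e2 > 0" "nb n p e2 \<subseteq> b" by blast
  moreover have "nb n p (min e1 e2) \<subseteq> nb n p e1" "nb n p (min e1 e2) \<subseteq> nb n p e2"
    by (simp_all add: nb_mono)
  ultimately show ?case by (intro exI[of _ "min e1 e2"]) auto
next
  case (UN K)
  then obtain k where "k \<in> K" "p \<in> k" by blast
  with UN.IH[of k p] show ?case by blast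
next
  case (Basis s)
  then show ?case using basis_nb by blast
qed

lemma open_nb:
  assumes "n \<ge> 2" "p \<in> split_interval_carrier n" "e > 0"
  shows "openin (split_interval n) (nb n p e)"
  unfolding split_interval_def by (rule topology_generated_by_Basis, rule nb_basis[OF assms])

lemma open_nb':
  assumes "openin (split_interval n) U" "p \<in> U"
  shows "\<exists>e>0. nb n p e \<subseteq> U"
  using gen_nb assms openin_topology_generated_by unfolding split_interval_def by blast

lemma topspace_si:
  assumes "n \<ge> 2"
  shows "topspace (split_interval n) = split_interval_carrier n"
proof
  show "topspace (split_interval n) \<subseteq> split_interval_carrier n"
    unfolding split_interval_def topology_generated_by_topspace split_interval_basis_def
      split_interval_carrier_def using assms by auto
  show "split_interval_carrier n \<subseteq> topspace (split_interval n)"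
  proof
    fix p assume "p \<in> split_interval_carrier n"
    then have "p \<in> nb n p 1" "nb n p 1 \<in> split_interval_basis n"
      using nb_mem nb_basis assms by auto
    then show "p \<in> topspace (split_interval n)"
      unfolding split_interval_def topology_generated_by_topspace by blast
  qed
qed

lemma nb_elem:
  assumes "r \<in> nb n p e"
  shows "r = p \<or> (fst r \<noteq> fst p \<and> \<bar>fst r - fst p\<bar> < e \<and> (snd p = 0 \<or> snd p = 1)
     \<and> (snd p = 0 \<longrightarrow> fst r < fst p) \<and> (snd p = 1 \<longrightarrow> fst r > fst p))"
  using assms unfolding nb_def by (auto split: if_splits)

lemma nb_disj:
  assumes "p \<noteq> q"
  shows "\<exists>e>0. disjnt (nb n p e) (nb n q e)"
proof -
  define e where "e = (if fst p = fst q then 1 else \<bar>fst p - fst q\<bar> / 2)"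
  have e: "e > 0" unfolding e_def by auto
  have "disjnt (nb n p e) (nb n q e)"
    unfolding disjnt_def
  proof (rule ccontr)
    assume "nb n p e \<inter> nb n q e \<noteq> {}"
    then obtain r where r: "r \<in> nb n p e" "r \<in> nb n q e" by blast
    have A: "r = p \<or> (fst r \<noteq> fst p \<and> \<bar>fst r - fst p\<bar> < e \<and> (snd p = 0 \<or> snd p = 1)
     \<and> (snd p = 0 \<longrightarrow> fst r < fst p) \<and> (snd p = 1 \<longrightarrow> fst r > fst p))"
      using nb_elem[OF r(1)] .
    have B: "r = q \<or> (fst r \<noteq> fst q \<and> \<bar>fst r - fst q\<bar> < e \<and> (snd q = 0 \<or> snd q = 1)
     \<and> (snd q = 0 \<longrightarrow> fst r < fst q) \<and> (snd q = 1 \<longrightarrow> fst r > fst q))"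
      using nb_elem[OF r(2)] .
    show False
    proof (cases "fst p = fst q")
      case True
      have "snd p \<noteq> snd q" using True assms by (metis prod.collapse)
      then show False using A B True assms by auto
    next
      case False
      then have ee: "e = \<bar>fst p - fst q\<bar> / 2" unfolding e_def by simp
      have "\<bar>fst r - fst p\<bar> < e \<or> r = p" using A by blast
      moreover have "\<bar>fst r - fst q\<bar> < e \<or> r = q" using B by blast
      ultimately show False using ee False assms by (auto simp: abs_if split: if_splits)
    qed
  qed
  with e show ?thesis by blast
qed

lemma hausdorff_si:
  assumes "n \<ge> 2"
  shows "Hausdorff_space (split_interval n)"
  unfolding Hausdorff_space_def topspace_si[OF assms]
proof (intro allI impI)
  fix x y assume h: "x \<in> split_interval_carrier n \<and> y \<in> split_interval_carrier n \<and> x \<noteq> y"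
  then obtain e where "e > 0" "disjnt (nb n x e) (nb n y e)" using nb_disj by blast
  then show "\<exists>U V. openin (split_interval n) U \<and> openin (split_interval n) V \<and> x \<in> U \<and> y \<in> V \<and> disjnt U V"
  proof (intro exI conjI)
    show "openin (split_interval n) (nb n x e)" using open_nb[OF assms] h \<open>e > 0\<close> by blast
    show "openin (split_interval n) (nb n y e)" using open_nb[OF assms] h \<open>e > 0\<close> by blast
  qed (auto simp: nb_mem)
qed

lemma compact_si:
  assumes "n \<ge> 2"
  shows "compact_space (split_interval n)"
  unfolding compact_space_alt topspace_si[OF assms]
proof (intro allI impI)
  fix \<U> assume h: "(\<forall>U\<in>\<U>. openin (split_interval n) U) \<and> split_interval_carrier n \<subseteq> \<Union>\<U>"
  have "\<forall>p\<in>split_interval_carrier n. \<exists>U. U \<in> \<U> \<and> p \<in> U" using h by blast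
  then obtain U where U: "\<And>p. p \<in> split_interval_carrier n \<Longrightarrow> U p \<in> \<U> \<and> p \<in> U p"
    by metis
  have "\<forall>x\<in>{0..1::real}. \<exists>d>0. nb n (x,0) d \<subseteq> U (x,0) \<and> nb n (x,1) d \<subseteq> U (x,1)"
  proof
    fix x :: real assume x: "x \<in> {0..1}"
    have c: "(x,0) \<in> split_interval_carrier n" "(x,1) \<in> split_interval_carrier n"
      using x assms by (auto simp: split_interval_carrier_def)
    obtain e0 where e0: "e0 > 0" "nb n (x,0) e0 \<subseteq> U (x,0)"
      using open_nb'[of n "U (x,0)" "(x,0)"] U[OF c(1)] h by blast
    obtain e1 where e1: "e1 > 0" "nb n (x,1) e1 \<subseteq> U (x,1)"
      using open_nb'[of n "U (x,1)" "(x,1)"] U[OF c(2)] h by blast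
    have "nb n (x,0) (min e0 e1) \<subseteq> nb n (x,0) e0" "nb n (x,1) (min e0 e1) \<subseteq> nb n (x,1) e1"
      by (simp_all add: nb_mono)
    then show "\<exists>d>0. nb n (x,0) d \<subseteq> U (x,0) \<and> nb n (x,1) d \<subseteq> U (x,1)"
      using e0 e1 by (intro exI[of _ "min e0 e1"]) auto
  qed
  then obtain d where d: "\<And>x. x \<in> {0..1::real} \<Longrightarrow> d x > 0 \<and> nb n (x,0) (d x) \<subseteq> U (x,0) \<and> nb n (x,1) (d x) \<subseteq> U (x,1)"
    by metis
  have "{0..1::real} \<subseteq> (\<Union>x\<in>{0..1}. ball x (d x))"
    using d by force
  then obtain T where T: "T \<subseteq> {0..1}" "finite T" "{0..1::real} \<subseteq> (\<Union>x\<in>T. ball x (d x))"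
    using compactE_image[of "{0..1::real}" "{0..1}" "\<lambda>x. ball x (d x)"] by auto
  show "\<exists>\<F>. finite \<F> \<and> \<F> \<subseteq> \<U> \<and> split_interval_carrier n \<subseteq> \<Union>\<F>"
  proof (intro exI conjI)
    show "finite (U ` (insert 0 (insert 1 T) \<times> {..<n}))" using T by simp
    show "U ` (insert 0 (insert 1 T) \<times> {..<n}) \<subseteq> \<U>"
      using T U by (auto simp: split_interval_carrier_def)
    show "split_interval_carrier n \<subseteq> \<Union> (U ` (insert 0 (insert 1 T) \<times> {..<n}))"
    proof
      fix p assume p: "p \<in> split_interval_carrier n"
      obtain y j where yj: "p = (y,j)" by force
      have y: "0 \<le> y" "y \<le> 1" "j < n" using p yj by (auto simp: split_interval_carrier_def)
      then obtain x where x: "x \<in> T" "y \<in> ball x (d x)" using T(3) by auto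
      have x01: "x \<in> {0..1}" using x T by auto
      have dx: "d x > 0" "nb n (x,0) (d x) \<subseteq> U (x,0)" "nb n (x,1) (d x) \<subseteq> U (x,1)"
        using d[OF x01] by auto
      have dist: "\<bar>y - x\<bar> < d x" using x(2) by (simp add: dist_real_def abs_minus_commute)
      consider "y = x \<or> y = 0 \<or> y = 1" | "y < x" "0 < y" | "y > x" "y < 1" using y by linarith
      then show "p \<in> \<Union> (U ` (insert 0 (insert 1 T) \<times> {..<n}))"
      proof cases
        case 1
        have "p \<in> U (y,j)" using U[OF p] yj by simp
        then show ?thesis using x y 1 by blast
      next
        case 2
        have "p \<in> nb n (x,0) (d x)" using 2 y dist yj unfolding nb_def by auto
        then have "p \<in> U (x,0)" using dx by blast
        then show ?thesis using x assms by force
      next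
        case 3
        have "p \<in> nb n (x,1) (d x)" using 3 y dist yj x01 unfolding nb_def by auto
        then have "p \<in> U (x,1)" using dx by blast
        then show ?thesis using x assms by force
      qed
    qed
  qed
qed

theorem mainTheorem4:
  fixes n :: nat
  assumes "n \<ge> 2"
  shows "topspace (split_interval n) = split_interval_carrier n
         \<and> compact_space (split_interval n) \<and> Hausdorff_space (split_interval n)"
  using topspace_si[OF assms] compact_si[OF assms] hausdorff_si[OF assms] by blast

end
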